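(* In the LTR setting, assume $|y(x)|\le M$ and $|\widetilde y_S(x)|\le M$ for all $x\in X$ and all training sets $S$, and that the pseudo-targets are $\beta_{loc}$-score-stable. Let $S,S'$ be two training sets differing in exactly one point, $h=h_S$, $h'=h_{S'}$ the LTR minimizers, $\Delta h=h'-h$ and $A=1+\kappa\sqrt{C+C'}$. Then for every $x\in X$, $$\frac{C}{m}\big[(h'(x)-y(x))^2-(h(x)-y(x))^2\big]+\frac{C'}{u}\big[(h'(x)-\widetilde y_{S'}(x))^2-(h(x)-\widetilde y_S(x))^2\big]\le 2AM\Big(\kappa\|\Delta h\|_K\Big(\frac Cm+\frac{C'}u\Big)+\beta_{loc}\frac{C'}u\Big).$$
   Context: Transductive setting: fixed full sample $X=\{x_1,\dots,x_{m+u}\}$ with real labels $y(x)$; training set $S\subset X$ of size $m$ with labels revealed, test set $T=X\setminus S$ of size $u$. Two training sets $S,S'$ differ in exactly one point if $S'=(S\setminus\{x\})\cup\{x'\}$ with $x\in S$, $x'\in X\setminus S$. LTR setting: $K$ is a positive semidefinite kernel on $X$ with $K(x,x)\le\kappa^2$ for all $x\in X$, $H_K$ its reproducing kernel Hilbert space with norm $\|\cdot\|_K$. For each training set $S$ a pseudo-target function $\widetilde y_S\colon X\to\mathbb{R}$ is given. With constants $C,C'\ge0$, the LTR objective is $$F(f,S)=\|f\|_K^2+\frac{C}{m}\sum_{x\in S}(f(x)-y(x))^2+\frac{C'}{u}\sum_{x\in T}(f(x)-\widetilde y_S(x))^2,$$ and the LTR algorithm returns $h_S=\arg\min_{f\in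 H_K}F(f,S)$. The pseudo-targets are $\beta_{loc}$-score-stable if $|\widetilde y_S(x)-\widetilde y_{S'}(x)|\le\beta_{loc}$ for all $x\in X$ and all pairs $S,S'$ differing in exactly one point. *)

theory Defs
  imports Complex_Main
begin

text \<open>The full sample X is a finite set; functions are real-valued on X and
  (for uniqueness) extended by 0 outside X.\<close>

definition psd_kernel :: "'a set \<Rightarrow> ('a \<Rightarrow> 'a \<Rightarrow> real) \<Rightarrow> bool" where
  "psd_kernel X K \<longleftrightarrow> (\<forall>x\<in>X. \<forall>z\<in>X. K x z = K z x) \<and>
     (\<forall>c::'a \<Rightarrow> real. 0 \<le> (\<Sum>x\<in>X. \<Sum>z\<in>X. c x * c z * K x z))"

definition kexp :: "'a set \<Rightarrow> ('a \<Rightarrow> 'a \<Rightarrow> real) \<Rightarrow> ('a \<Rightarrow> real) \<Rightarrow> 'a \<Rightarrow> real" where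
  "kexp X K c = (\<lambda>x. if x \<in> X then (\<Sum>z\<in>X. c z * K z x) else 0)"

definition in_rkhs :: "'a set \<Rightarrow> ('a \<Rightarrow> 'a \<Rightarrow> real) \<Rightarrow> ('a \<Rightarrow> real) \<Rightarrow> bool" where
  "in_rkhs X K f \<longleftrightarrow> (\<exists>c. f = kexp X K c)"

definition rkhs_norm2 :: "'a set \<Rightarrow> ('a \<Rightarrow> 'a \<Rightarrow> real) \<Rightarrow> ('a \<Rightarrow> real) \<Rightarrow> real" where
  "rkhs_norm2 X K f = (THE v. \<exists>c. f = kexp X K c \<and> v = (\<Sum>x\<in>X. \<Sum>z\<in>X. c x * c z * K x z))"

definition rkhs_norm :: "'a set \<Rightarrow> ('a \<Rightarrow> 'a \<Rightarrow> real) \<Rightarrow> ('a \<Rightarrow> real) \<Rightarrow> real" where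
  "rkhs_norm X K f = sqrt (rkhs_norm2 X K f)"

text \<open>LTR objective F(f,S); m = |S|, u = |X - S|.\<close>
definition ltr_obj :: "'a set \<Rightarrow> ('a \<Rightarrow> 'a \<Rightarrow> real) \<Rightarrow> ('a \<Rightarrow> real) \<Rightarrow> ('a set \<Rightarrow> 'a \<Rightarrow> real)
    \<Rightarrow> real \<Rightarrow> real \<Rightarrow> 'a set \<Rightarrow> ('a \<Rightarrow> real) \<Rightarrow> real" where
  "ltr_obj X K y yt C C' S f =
     rkhs_norm2 X K f
     + C / real (card S) * (\<Sum>x\<in>S. (f x - y x)\<^sup>2)
     + C' / real (card (X - S)) * (\<Sum>x\<in>X - S. (f x - yt S x)\<^sup>2)"

definition ltr_minimizer :: "'a set \<Rightarrow> ('a \<Rightarrow> 'a \<Rightarrow> real) \<Rightarrow> ('a \<Rightarrow> real) \<Rightarrow> ('a set \<Rightarrow> 'a \<Rightarrow> real)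
    \<Rightarrow> real \<Rightarrow> real \<Rightarrow> 'a set \<Rightarrow> ('a \<Rightarrow> real) \<Rightarrow> bool" where
  "ltr_minimizer X K y yt C C' S h \<longleftrightarrow> in_rkhs X K h \<and>
     (\<forall>f. in_rkhs X K f \<longrightarrow> ltr_obj X K y yt C C' S h \<le> ltr_obj X K y yt C C' S f)"

definition training_set :: "'a set \<Rightarrow> nat \<Rightarrow> 'a set \<Rightarrow> bool" where
  "training_set X m S \<longleftrightarrow> S \<subseteq> X \<and> card S = m"

definition differ_one :: "'a set \<Rightarrow> 'a set \<Rightarrow> 'a set \<Rightarrow> bool" where
  "differ_one X S S' \<longleftrightarrow> (\<exists>x x'. x \<in> S \<and> x' \<in> X - S \<and> S' = insert x' (S - {x}))"

definition score_stable :: "'a set \<Rightarrow> nat \<Rightarrow> ('a set \<Rightarrow> 'a \<Rightarrow> real) \<Rightarrow> real \<Rightarrow> bool" where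
  "score_stable X m yt \<beta> \<longleftrightarrow> (\<forall>S S'. training_set X m S \<longrightarrow> differ_one X S S' \<longrightarrow>
      (\<forall>x\<in>X. \<bar>yt S x - yt S' x\<bar> \<le> \<beta>))"

end

theory Submission imports Defs begin

definition Qf :: "'a set \<Rightarrow> ('a \<Rightarrow> 'a \<Rightarrow> real) \<Rightarrow> ('a \<Rightarrow> real) \<Rightarrow> real" where
  "Qf X K c = (\<Sum>x\<in>X. \<Sum>z\<in>X. c x * c z * K x z)"
definition Bf :: "'a set \<Rightarrow> ('a \<Rightarrow> 'a \<Rightarrow> real) \<Rightarrow> ('a \<Rightarrow> real) \<Rightarrow> ('a \<Rightarrow> real) \<Rightarrow> real" where
  "Bf X K c d = (\<Sum>x\<in>X. \<Sum>z\<in>X. c x * d z * K x z)"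

lemma Bf_sym: assumes "psd_kernel X K" shows "Bf X K c d = Bf X K d c"
proof -
  have s: "\<And>x z. x \<in> X \<Longrightarrow> z \<in> X \<Longrightarrow> K x z = K z x" using assms unfolding psd_kernel_def by blast
  have "Bf X K c d = (\<Sum>z\<in>X. \<Sum>x\<in>X. c x * d z * K x z)" unfolding Bf_def by (rule sum.swap)
  also have "\<dots> = Bf X K d c" unfolding Bf_def
    by (intro sum.cong refl) (simp add: s mult_ac)
  finally show ?thesis .
qed

lemma Bf_kexp: "Bf X K c d = (\<Sum>x\<in>X. d x * kexp X K c x)"
proof -
  have "Bf X K c d = (\<Sum>z\<in>X. \<Sum>x\<in>X. c x * d z * K x z)" unfolding Bf_def by (rule sum.swap)
  also have "\<dots> = (\<Sum>x\<in>X. d x * kexp X K c x)" unfolding kexp_def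
    by (simp add: sum_distrib_left mult_ac)
  finally show ?thesis .
qed

lemma Qf_Bf: "Qf X K c = Bf X K c c" unfolding Qf_def Bf_def ..

lemma Qf_eq: assumes "psd_kernel X K" "kexp X K c1 = kexp X K c2"
  shows "Qf X K c1 = Qf X K c2"
proof -
  have "Qf X K c1 = (\<Sum>x\<in>X. c1 x * kexp X K c1 x)" by (simp add: Qf_Bf Bf_kexp)
  also have "\<dots> = (\<Sum>x\<in>X. c1 x * kexp X K c2 x)" using assms(2) by simp
  also have "\<dots> = Bf X K c2 c1" by (simp add: Bf_kexp)
  also have "\<dots> = Bf X K c1 c2" by (rule Bf_sym[OF assms(1)])
  also have "\<dots> = (\<Sum>x\<in>X. c2 x * kexp X K c1 x)" by (simp add: Bf_kexp)
  also have "\<dots> = (\<Sum>x\<in>X. c2 x * kexp X K c2 x)" using assms(2) by simp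
  also have "\<dots> = Qf X K c2" by (simp add: Qf_Bf Bf_kexp)
  finally show ?thesis .
qed

lemma norm2_kexp: assumes "psd_kernel X K" shows "rkhs_norm2 X K (kexp X K c) = Qf X K c"
  unfolding rkhs_norm2_def
proof (rule the_equality)
  show "\<exists>c'. kexp X K c = kexp X K c' \<and> Qf X K c = (\<Sum>x\<in>X. \<Sum>z\<in>X. c' x * c' z * K x z)"
    by (auto simp: Qf_def)
next
  fix v assume "\<exists>c'. kexp X K c = kexp X K c' \<and> v = (\<Sum>x\<in>X. \<Sum>z\<in>X. c' x * c' z * K x z)"
  then obtain c' where "kexp X K c = kexp X K c'" "v = Qf X K c'" by (auto simp: Qf_def)
  then show "v = Qf X K c" using Qf_eq[OF assms] by metis
qed

lemma Qf_nonneg: "psd_kernel X K \<Longrightarrow> 0 \<le> Qf X K c"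
  unfolding psd_kernel_def Qf_def by blast

lemma Qf_expand: assumes "psd_kernel X K"
  shows "Qf X K (\<lambda>z. c z + t * d z) = Qf X K c + 2 * t * Bf X K c d + t^2 * Qf X K d"
proof -
  have "Qf X K (\<lambda>z. c z + t * d z) = Qf X K c + t * Bf X K c d + t * Bf X K d c + t^2 * Qf X K d"
    by (simp add: Qf_def Bf_def algebra_simps sum.distrib sum_distrib_left power2_eq_square)
  then show ?thesis using Bf_sym[OF assms, of d c] by simp
qed

lemma discr: fixes a b c :: real
  assumes "\<forall>t. 0 \<le> a + 2 * t * b + t^2 * c" "0 \<le> c" shows "b^2 \<le> a * c"
proof (cases "c = 0")
  case True
  show ?thesis
  proof (rule ccontr)
    assume "\<not> ?thesis"
    hence "b \<noteq> 0" using True by simp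
    define t where "t = -(\<bar>a\<bar>+1)/(2*b)"
    have "2 * t * b = -(\<bar>a\<bar>+1)" unfolding t_def using \<open>b \<noteq> 0\<close> by (simp add: field_simps)
    moreover have "0 \<le> a + 2 * t * b + t^2 * c" using assms(1) by blast
    moreover have "a \<le> \<bar>a\<bar>" by simp
    ultimately show False using True by simp
  qed
next
  case False
  hence c: "c > 0" using assms(2) by simp
  have "0 \<le> a + 2 * (-b/c) * b + (-b/c)^2 * c" using assms(1) by blast
  also have "\<dots> = a - b^2/c" using c by (simp add: field_simps power2_eq_square)
  finally show ?thesis using c by (simp add: field_simps)
qed

lemma sum_ind: assumes "finite X" "x0 \<in> X"
  shows "(\<Sum>x\<in>X. (if x = x0 then 1 else 0) * (g x::real)) = g x0"
proof -
  have "(\<Sum>x\<in>X. (if x = x0 then 1 else 0) * g x) = (\<Sum>x\<in>X. if x = x0 then g x else 0)"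
    by (intro sum.cong) auto
  also have "\<dots> = g x0" using assms by simp
  finally show ?thesis .
qed

lemma eval_bound:
  assumes psd: "psd_kernel X K" and x0: "x0 \<in> X" and fin: "finite X"
  shows "(kexp X K c x0)^2 \<le> Qf X K c * K x0 x0"
proof -
  define e where "e = (\<lambda>z. if z = x0 then 1 else (0::real))"
  have B: "Bf X K c e = kexp X K c x0"
    using x0 fin by (simp add: Bf_kexp e_def sum_ind)
  have Q: "Qf X K e = K x0 x0"
    using x0 fin by (simp add: Qf_Bf Bf_kexp e_def sum_ind kexp_def)
  have "\<forall>t. 0 \<le> Qf X K c + 2 * t * Bf X K c e + t^2 * Qf X K e"
    using Qf_nonneg[OF psd] Qf_expand[OF psd] by metis
  moreover have "0 \<le> Qf X K e" by (rule Qf_nonneg[OF psd])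
  ultimately show ?thesis using discr B Q by metis
qed

lemma rkhs_bound:
  assumes psd: "psd_kernel X K" and fin: "finite X" and f: "in_rkhs X K f" and x: "x \<in> X"
    and k: "0 \<le> \<kappa>" "\<forall>z\<in>X. K z z \<le> \<kappa>\<^sup>2"
  shows "\<bar>f x\<bar> \<le> \<kappa> * rkhs_norm X K f"
proof -
  obtain c where fc: "f = kexp X K c" using f unfolding in_rkhs_def by blast
  have n: "rkhs_norm X K f = sqrt (Qf X K c)" unfolding rkhs_norm_def fc norm2_kexp[OF psd] ..
  have q: "0 \<le> Qf X K c" by (rule Qf_nonneg[OF psd])
  have "(f x)^2 \<le> Qf X K c * K x x" unfolding fc by (rule eval_bound[OF psd x fin])
  also have "\<dots> \<le> Qf X K c * \<kappa>^2" using k x q by (simp add: mult_left_mono)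
  finally have "sqrt ((f x)^2) \<le> sqrt (Qf X K c * \<kappa>^2)" by (rule real_sqrt_le_mono)
  then show ?thesis using n k by (simp add: real_sqrt_mult mult.commute)
qed

lemma norm2_nonneg: "psd_kernel X K \<Longrightarrow> in_rkhs X K f \<Longrightarrow> 0 \<le> rkhs_norm2 X K f"
  unfolding in_rkhs_def using norm2_kexp Qf_nonneg by metis

lemma kexp_zero: "kexp X K (\<lambda>_. 0) = (\<lambda>_. 0)"
  unfolding kexp_def by auto

lemma zero_rkhs: "in_rkhs X K (\<lambda>_. 0)"
  unfolding in_rkhs_def by (rule exI[of _ "\<lambda>_. 0"]) (simp add: kexp_zero)

lemma zero_norm2: "psd_kernel X K \<Longrightarrow> rkhs_norm2 X K (\<lambda>_. 0) = 0"
  using norm2_kexp[of X K "\<lambda>_. 0"] by (simp add: kexp_zero Qf_def)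

lemma diff_rkhs: assumes "in_rkhs X K f" "in_rkhs X K g" shows "in_rkhs X K (\<lambda>z. f z - g z)"
proof -
  obtain c1 c2 where "f = kexp X K c1" "g = kexp X K c2" using assms unfolding in_rkhs_def by blast
  then have "(\<lambda>z. f z - g z) = kexp X K (\<lambda>z. c1 z - c2 z)"
    unfolding kexp_def by (auto simp: sum_subtractf left_diff_distrib)
  then show ?thesis unfolding in_rkhs_def by blast
qed

lemma min_bound:
  assumes psd: "psd_kernel X K" and fin: "finite X" and m: "0 < m" "m < card X"
    and CC: "0 \<le> C" "0 \<le> C'"
    and y_bd: "\<forall>z\<in>X. \<bar>y z\<bar> \<le> M"
    and yt_bd: "\<forall>z\<in>X. \<bar>yt S z\<bar> \<le> M"
    and S: "training_set X m S"
    and h: "ltr_minimizer X K y yt C C' S h"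
  shows "rkhs_norm2 X K h \<le> (C + C') * M^2"
proof -
  have SX: "S \<subseteq> X" and cS: "card S = m" using S unfolding training_set_def by auto
  have finS: "finite S" using SX fin finite_subset by blast
  have cXS: "card (X - S) = card X - m" using card_Diff_subset[OF finS SX] cS by simp
  have hr: "in_rkhs X K h" using h unfolding ltr_minimizer_def by blast
  have le: "ltr_obj X K y yt C C' S h \<le> ltr_obj X K y yt C C' S (\<lambda>_. 0)"
    using h zero_rkhs unfolding ltr_minimizer_def by blast
  have s1: "(\<Sum>x\<in>S. ((0::real) - y x)\<^sup>2) \<le> real (card S) * M^2"
  proof -
    have "(\<Sum>x\<in>S. ((0::real) - y x)\<^sup>2) \<le> (\<Sum>x\<in>S. M^2)"
    proof (rule sum_mono)
      fix x assume "x \<in> S"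
      then have "\<bar>y x\<bar> \<le> M" using SX y_bd by blast
      then show "(0 - y x)\<^sup>2 \<le> M^2" by (metis abs_ge_zero power2_abs power_mono diff_0 power2_minus)
    qed
    then show ?thesis by simp
  qed
  have s2: "(\<Sum>x\<in>X - S. ((0::real) - yt S x)\<^sup>2) \<le> real (card (X - S)) * M^2"
  proof -
    have "(\<Sum>x\<in>X - S. ((0::real) - yt S x)\<^sup>2) \<le> (\<Sum>x\<in>X - S. M^2)"
    proof (rule sum_mono)
      fix x assume "x \<in> X - S"
      then have "\<bar>yt S x\<bar> \<le> M" using yt_bd by blast
      then show "(0 - yt S x)\<^sup>2 \<le> M^2" by (metis abs_ge_zero power2_abs power_mono diff_0 power2_minus)
    qed
    then show ?thesis by simp
  qed
  have p1: "real (card S) > 0" "real (card (X - S)) > 0" using cS cXS m by auto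
  have t1: "C / real (card S) * (\<Sum>x\<in>S. ((0::real) - y x)\<^sup>2) \<le> C * M^2"
  proof -
    have "C / real (card S) * (\<Sum>x\<in>S. ((0::real) - y x)\<^sup>2) \<le> C / real (card S) * (real (card S) * M^2)"
      using s1 CC p1 by (intro mult_left_mono) auto
    also have "\<dots> = C * M^2" using p1 by simp
    finally show ?thesis .
  qed
  have t2: "C' / real (card (X - S)) * (\<Sum>x\<in>X - S. ((0::real) - yt S x)\<^sup>2) \<le> C' * M^2"
  proof -
    have "C' / real (card (X - S)) * (\<Sum>x\<in>X - S. ((0::real) - yt S x)\<^sup>2) \<le> C' / real (card (X - S)) * (real (card (X - S)) * M^2)"
      using s2 CC p1 by (intro mult_left_mono) auto
    also have "\<dots> = C' * M^2" using p1 by simp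
    finally show ?thesis .
  qed
  have nn1: "0 \<le> C / real (card S) * (\<Sum>x\<in>S. (h x - y x)\<^sup>2)"
    using CC by (intro mult_nonneg_nonneg sum_nonneg) auto
  have nn2: "0 \<le> C' / real (card (X - S)) * (\<Sum>x\<in>X - S. (h x - yt S x)\<^sup>2)"
    using CC by (intro mult_nonneg_nonneg sum_nonneg) auto
  have "rkhs_norm2 X K h \<le> ltr_obj X K y yt C C' S h" unfolding ltr_obj_def using nn1 nn2 by linarith
  also note le
  also have "ltr_obj X K y yt C C' S (\<lambda>_. 0) \<le> C * M^2 + C' * M^2"
    unfolding ltr_obj_def zero_norm2[OF psd] using t1 t2 by linarith
  finally show ?thesis by (simp add: algebra_simps)
qed

theorem lemma11:
  fixes X :: "'a set" and K :: "'a \<Rightarrow> 'a \<Rightarrow> real" and y :: "'a \<Rightarrow> real"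
    and yt :: "'a set \<Rightarrow> 'a \<Rightarrow> real" and m :: nat
    and C C' \<kappa> M \<beta> :: real and S S' :: "'a set" and h h' :: "'a \<Rightarrow> real" and x :: 'a
  assumes finX: "finite X"
    and m_pos: "0 < m" and u_pos: "m < card X"
    and psd: "psd_kernel X K"
    and kappa: "0 \<le> \<kappa>" "\<forall>z\<in>X. K z z \<le> \<kappa>\<^sup>2"
    and CC: "0 \<le> C" "0 \<le> C'"
    and y_bd: "\<forall>z\<in>X. \<bar>y z\<bar> \<le> M"
    and yt_bd: "\<forall>T. training_set X m T \<longrightarrow> (\<forall>z\<in>X. \<bar>yt T z\<bar> \<le> M)"
    and stable: "score_stable X m yt \<beta>"
    and S: "training_set X m S" and diff: "differ_one X S S'"
    and h: "ltr_minimizer X K y yt C C' S h"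
    and h': "ltr_minimizer X K y yt C C' S' h'"
    and x: "x \<in> X"
  shows "C / real m * ((h' x - y x)\<^sup>2 - (h x - y x)\<^sup>2)
         + C' / real (card X - m) * ((h' x - yt S' x)\<^sup>2 - (h x - yt S x)\<^sup>2)
       \<le> 2 * (1 + \<kappa> * sqrt (C + C')) * M *
         (\<kappa> * rkhs_norm X K (\<lambda>z. h' z - h z) * (C / real m + C' / real (card X - m))
          + \<beta> * (C' / real (card X - m)))"
proof -
  have SX: "S \<subseteq> X" and cS: "card S = m" using S unfolding training_set_def by auto
  have finS: "finite S" using SX finX finite_subset by blast
  obtain a a' where a: "a \<in> S" and a': "a' \<in> X - S" and S'eq: "S' = insert a' (S - {a})"
    using diff unfolding differ_one_def by blast
  have S': "training_set X m S'"
  proof -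
    have "S' \<subseteq> X" using S'eq SX a' by auto
    moreover have "card S' = m"
    proof -
      have "a' \<notin> S - {a}" using a' by auto
      then have "card S' = Suc (card (S - {a}))" using S'eq finS by simp
      also have "\<dots> = m" using a finS cS m_pos by (simp add: card_Diff_singleton)
      finally show ?thesis .
    qed
    ultimately show ?thesis unfolding training_set_def by blast
  qed
  have M0: "0 \<le> M" using y_bd x by fastforce
  have hr: "in_rkhs X K h" using h unfolding ltr_minimizer_def by blast
  have hr': "in_rkhs X K h'" using h' unfolding ltr_minimizer_def by blast
  define D where "D = rkhs_norm X K (\<lambda>z. h' z - h z)"
  define s where "s = sqrt (C + C')"
  define p where "p = C / real m"
  define q where "q = C' / real (card X - m)"
  have p0: "0 \<le> p" and q0: "0 \<le> q" using CC unfolding p_def q_def by auto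
  have s0: "0 \<le> s" using CC unfolding s_def by simp
  have hd: "\<bar>h' x - h x\<bar> \<le> \<kappa> * D"
    unfolding D_def using rkhs_bound[OF psd finX diff_rkhs[OF hr' hr] x kappa] by simp
  have nb: "\<bar>g x\<bar> \<le> \<kappa> * s * M" if "ltr_minimizer X K y yt C C' T g" "training_set X m T" for g T
  proof -
    have gr: "in_rkhs X K g" using that unfolding ltr_minimizer_def by blast
    have "rkhs_norm2 X K g \<le> (C + C') * M^2"
      using min_bound[OF psd finX m_pos u_pos CC y_bd _ that(2) that(1)] yt_bd that(2) by blast
    then have "rkhs_norm X K g \<le> sqrt ((C + C') * M^2)" unfolding rkhs_norm_def
      by (rule real_sqrt_le_mono)
    also have "\<dots> = s * M" using M0 by (simp add: s_def real_sqrt_mult)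
    finally have "rkhs_norm X K g \<le> s * M" .
    then have "\<kappa> * rkhs_norm X K g \<le> \<kappa> * (s * M)" using kappa by (intro mult_left_mono) auto
    then show ?thesis using rkhs_bound[OF psd finX gr x kappa] by simp
  qed
  have hb: "\<bar>h x\<bar> \<le> \<kappa> * s * M" using nb h S by blast
  have hb': "\<bar>h' x\<bar> \<le> \<kappa> * s * M" using nb h' S' by blast
  have yb: "\<bar>y x\<bar> \<le> M" using y_bd x by blast
  have tb: "\<bar>yt S x\<bar> \<le> M" using yt_bd S x by blast
  have tb': "\<bar>yt S' x\<bar> \<le> M" using yt_bd S' x by blast
  have st: "\<bar>yt S x - yt S' x\<bar> \<le> \<beta>" using stable S diff x unfolding score_stable_def by blast
  define A where "A = 1 + \<kappa> * s"
  have T1: "(h' x - y x)\<^sup>2 - (h x - y x)\<^sup>2 \<le> \<kappa> * D * (2 * A * M)"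
  proof -
    have "(h' x - y x)\<^sup>2 - (h x - y x)\<^sup>2 = (h' x - h x) * (h' x + h x - 2 * y x)"
      by (simp add: power2_eq_square algebra_simps)
    also have "\<dots> \<le> \<bar>h' x - h x\<bar> * \<bar>h' x + h x - 2 * y x\<bar>"
      by (metis abs_ge_self abs_mult)
    also have "\<dots> \<le> \<kappa> * D * (2 * A * M)"
    proof (rule mult_mono[OF hd])
      show "\<bar>h' x + h x - 2 * y x\<bar> \<le> 2 * A * M" using hb hb' yb unfolding A_def
        by (simp add: algebra_simps)
      show "0 \<le> \<kappa> * D" using hd by linarith
    qed simp
    finally show ?thesis .
  qed
  have T2: "(h' x - yt S' x)\<^sup>2 - (h x - yt S x)\<^sup>2 \<le> (\<kappa> * D + \<beta>) * (2 * A * M)"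
  proof -
    have "(h' x - yt S' x)\<^sup>2 - (h x - yt S x)\<^sup>2
        = ((h' x - h x) - (yt S' x - yt S x)) * (h' x + h x - yt S' x - yt S x)"
      by (simp add: power2_eq_square algebra_simps)
    also have "\<dots> \<le> \<bar>(h' x - h x) - (yt S' x - yt S x)\<bar> * \<bar>h' x + h x - yt S' x - yt S x\<bar>"
      by (metis abs_ge_self abs_mult)
    also have "\<dots> \<le> (\<kappa> * D + \<beta>) * (2 * A * M)"
    proof (rule mult_mono)
      show "\<bar>(h' x - h x) - (yt S' x - yt S x)\<bar> \<le> \<kappa> * D + \<beta>" using hd st by linarith
      show "\<bar>h' x + h x - yt S' x - yt S x\<bar> \<le> 2 * A * M" using hb hb' tb tb' unfolding A_def
        by (simp add: algebra_simps)
      show "0 \<le> \<kappa> * D + \<beta>" using hd st by linarith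
    qed simp
    finally show ?thesis .
  qed
  have "p * ((h' x - y x)\<^sup>2 - (h x - y x)\<^sup>2) + q * ((h' x - yt S' x)\<^sup>2 - (h x - yt S x)\<^sup>2)
      \<le> p * (\<kappa> * D * (2 * A * M)) + q * ((\<kappa> * D + \<beta>) * (2 * A * M))"
    using T1 T2 p0 q0 by (intro add_mono mult_left_mono) auto
  also have "\<dots> = 2 * A * M * (\<kappa> * D * (p + q) + \<beta> * q)" by (simp add: algebra_simps)
  finally show ?thesis unfolding p_def q_def A_def s_def D_def .
qed

end
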